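(* Let $U$ be a machine such that for every machine $V$ there exists a total computable length-bounded function $h$ such that $U(h(x))=V(x)$ whenever $V(x)$ is defined (with no requirement on $U(h(x))$ when $V(x)$ is undefined). Then $U$ is effectively optimal.
   Context: A machine is a partial computable function from binary strings to binary strings. A total function $h$ on strings is length-bounded if $|h(x)|\le|x|+c$ for some $c$ and all $x$. $U$ is effectively optimal if for every machine $V$ there is a total computable length-bounded $h$ with $V(x)=U(h(x))$ for all $x$ (both sides undefined, or both defined and equal). *)

theory Defs
  imports Main
begin

datatype recf =
    Zero
  | Succ
  | Proj nat
  | Comp recf "recf list"
  | Prim recf recf
  | Mu recf

inductive eval :: "recf \<Rightarrow> nat list \<Rightarrow> nat \<Rightarrow> bool" where
  eval_Zero: "eval Zero xs 0"
| eval_Succ: "eval Succ (x # xs) (Suc x)"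
| eval_Proj: "i < length xs \<Longrightarrow> eval (Proj i) xs (xs ! i)"
| eval_Comp: "list_all2 (\<lambda>g y. eval g xs y) gs ys \<Longrightarrow> eval f ys z \<Longrightarrow> eval (Comp f gs) xs z"
| eval_Prim0: "eval f xs y \<Longrightarrow> eval (Prim f g) (0 # xs) y"
| eval_PrimS: "eval (Prim f g) (n # xs) y \<Longrightarrow> eval g (n # y # xs) z \<Longrightarrow> eval (Prim f g) (Suc n # xs) z"
| eval_Mu: "eval f (n # xs) 0 \<Longrightarrow> (\<forall>m<n. \<exists>y. eval f (m # xs) (Suc y)) \<Longrightarrow> eval (Mu f) xs n"

type_synonym bstring = "bool list"

text \<open>Standard bijection between binary strings and natural numbers
  (empty string \<mapsto> 0, bijective base-2 numeration).\<close>

fun enc :: "bstring \<Rightarrow> nat" where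
  "enc [] = 0"
| "enc (b # xs) = 2 * enc xs + (if b then 2 else 1)"

definition machine :: "(bstring \<Rightarrow> bstring option) \<Rightarrow> bool" where
  "machine V \<longleftrightarrow>
     (\<exists>r. \<forall>x m. eval r [enc x] m \<longleftrightarrow> (\<exists>y. V x = Some y \<and> m = enc y))"

definition total_computable :: "(bstring \<Rightarrow> bstring) \<Rightarrow> bool" where
  "total_computable h \<longleftrightarrow> machine (\<lambda>x. Some (h x))"

definition length_bounded :: "(bstring \<Rightarrow> bstring) \<Rightarrow> bool" where
  "length_bounded h \<longleftrightarrow> (\<exists>c. \<forall>x. length (h x) \<le> length x + c)"

definition effectively_optimal :: "(bstring \<Rightarrow> bstring option) \<Rightarrow> bool" where
  "effectively_optimal U \<longleftrightarrow>
     (\<forall>V. machine V \<longrightarrow>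
        (\<exists>h. total_computable h \<and> length_bounded h \<and> (\<forall>x. V x = U (h x))))"

end

theory Submission
  imports Defs "HOL-Library.Nat_Bijection"
begin


lemma l2: "list_all2 (\<lambda>g y. P g y \<and> (\<forall>y'. P g y' \<longrightarrow> y = y')) gs ys \<Longrightarrow> list_all2 P gs ys' \<Longrightarrow> ys = ys'"
proof (induction gs ys arbitrary: ys' rule: list_all2_induct)
  case Nil then show ?case by simp
next
  case (Cons g gs y ys)
  from Cons.prems obtain y' ys2 where "ys' = y' # ys2" "P g y'" "list_all2 P gs ys2"
    by (cases ys') auto
  then show ?case using Cons by auto
qed

inductive_cases ZeroE[elim!]: "eval Zero xs y"
inductive_cases SuccE[elim!]: "eval Succ xs y"
inductive_cases ProjE[elim!]: "eval (Proj i) xs y"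
inductive_cases CompE[elim!]: "eval (Comp f gs) xs y"
inductive_cases PrimE: "eval (Prim f g) xs y"
inductive_cases MuE[elim!]: "eval (Mu f) xs y"

lemma eval_det: "eval f xs y \<Longrightarrow> eval f xs y' \<Longrightarrow> y = y'"
proof (induction arbitrary: y' rule: eval.induct)
  case (eval_Zero xs) then show ?case by auto
next
  case (eval_Succ x xs) then show ?case by auto
next
  case (eval_Proj i xs) then show ?case by auto
next
  case (eval_Comp xs gs ys f z)
  from eval_Comp.prems obtain ys' where a: "list_all2 (\<lambda>g y. eval g xs y) gs ys'" and b: "eval f ys' y'"
    by blast
  have "ys = ys'" by (rule l2[OF eval_Comp(1) a])
  then show ?case using eval_Comp.IH b by simp
next
  case (eval_Prim0 f xs y g) from eval_Prim0.prems show ?case by (cases rule: PrimE) (use eval_Prim0.IH in auto)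
next
  case (eval_PrimS f g n xs y z)
  from eval_PrimS.prems obtain y2 where "eval (Prim f g) (n # xs) y2" "eval g (n # y2 # xs) y'"
    by (cases rule: PrimE) auto
  then show ?case using eval_PrimS.IH by auto
next
  case (eval_Mu f n xs)
  from eval_Mu.prems obtain n' where n': "y' = n'" "eval f (n' # xs) 0" "\<forall>m<n'. \<exists>y. eval f (m # xs) (Suc y)"
    by blast
  have IH1: "\<And>y'. eval f (n # xs) y' \<Longrightarrow> 0 = y'" using eval_Mu.IH(1) by blast
  have IH2: "\<And>m. m < n \<Longrightarrow> \<exists>y. eval f (m # xs) (Suc y) \<and> (\<forall>y'. eval f (m # xs) y' \<longrightarrow> Suc y = y')"
    using eval_Mu.IH(2) by blast
  show ?case
  proof (rule ccontr)
    assume "n \<noteq> y'"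
    then consider "n < n'" | "n' < n" using n' by linarith
    then show False
    proof cases
      case 1 then obtain y where "eval f (n # xs) (Suc y)" using n' by auto
      from IH1[OF this] show False by simp
    next
      case 2 then obtain y where "\<forall>y'. eval f (n' # xs) y' \<longrightarrow> Suc y = y'"
        using IH2 by blast
      then show False using n'(2) by auto
    qed
  qed
qed

declare ZeroE[rule del] SuccE[rule del] ProjE[rule del] CompE[rule del] MuE[rule del]

definition rf :: "nat \<Rightarrow> ((nat \<Rightarrow> nat) \<Rightarrow> nat) \<Rightarrow> bool" where
  "rf n F \<longleftrightarrow> (\<exists>r. \<forall>e. eval r (map e [0..<n]) (F e))"

definition rp :: "nat \<Rightarrow> ((nat \<Rightarrow> nat) \<Rightarrow> bool) \<Rightarrow> bool" where
  "rp n P \<longleftrightarrow> rf n (\<lambda>e. if P e then 1 else 0)"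

definition econs :: "nat \<Rightarrow> (nat \<Rightarrow> nat) \<Rightarrow> nat \<Rightarrow> nat" where
  "econs k e i = (case i of 0 \<Rightarrow> k | Suc j \<Rightarrow> e j)"

lemma econs_simps[simp]: "econs k e 0 = k" "econs k e (Suc i) = e i"
  by (simp_all add: econs_def)

lemma map_upt_Suc_env: "map e [0..<Suc n] = e 0 # map (\<lambda>i. e (Suc i)) [0..<n]"
  by (induction n) auto

lemma map_econs: "map (econs k e) [0..<Suc n] = k # map e [0..<n]"
  by (simp only: map_upt_Suc_env econs_simps)

lemma rf_zero: "rf n (\<lambda>e. 0)"
  unfolding rf_def by (auto intro: eval_Zero)

lemma rf_var: "i < n \<Longrightarrow> rf n (\<lambda>e. e i)"
  unfolding rf_def
  by (rule exI[of _ "Proj i"]) (metis (no_types, lifting) add_0 diff_zero eval_Proj length_map length_upt nth_map_upt)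

lemma rf_Suc: "rf n f \<Longrightarrow> rf n (\<lambda>e. Suc (f e))"
  unfolding rf_def
proof -
  assume "\<exists>r. \<forall>e. eval r (map e [0..<n]) (f e)"
  then obtain r where r: "\<forall>e. eval r (map e [0..<n]) (f e)" by blast
  show "\<exists>r. \<forall>e. eval r (map e [0..<n]) (Suc (f e))"
    by (rule exI[of _ "Comp Succ [r]"]) (auto intro!: eval_Comp eval_Succ simp: r)
qed

lemma rf_comp:
  assumes "rf m f" "\<forall>j<m. rf n (g j)"
  shows "rf n (\<lambda>e. f (\<lambda>j. g j e))"
proof -
  obtain r where r: "\<forall>e. eval r (map e [0..<m]) (f e)" using assms(1) unfolding rf_def by blast
  have "\<forall>j. \<exists>s. j < m \<longrightarrow> (\<forall>e. eval s (map e [0..<n]) (g j e))" using assms(2) unfolding rf_def by blast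
  then obtain R where R: "\<And>j e. j < m \<Longrightarrow> eval (R j) (map e [0..<n]) (g j e)" by metis
  show ?thesis unfolding rf_def
  proof (rule exI[of _ "Comp r (map R [0..<m])"], intro allI)
    fix e
    have "list_all2 (\<lambda>g y. eval g (map e [0..<n]) y) (map R [0..<m]) (map (\<lambda>j. g j e) [0..<m])"
      by (auto simp: list_all2_conv_all_nth R)
    moreover have "eval r (map (\<lambda>j. g j e) [0..<m]) (f (\<lambda>j. g j e))" using r by blast
    ultimately show "eval (Comp r (map R [0..<m])) (map e [0..<n]) (f (\<lambda>j. g j e))"
      by (rule eval_Comp)
  qed
qed

lemma rf_comp2:
  assumes "rf 2 f" "rf n a" "rf n b"
  shows "rf n (\<lambda>e. f (\<lambda>j. if j = 0 then a e else b e))"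
proof -
  have "rf n (\<lambda>e. f (\<lambda>j. (\<lambda>j e. if j = 0 then a e else b e) j e))"
    by (rule rf_comp[OF assms(1)]) (auto simp: assms(2,3) less_2_cases_iff)
  then show ?thesis by simp
qed

lemma rf_comp1:
  assumes "rf 1 f" "rf n a"
  shows "rf n (\<lambda>e. f (\<lambda>j. a e))"
  using rf_comp[of 1 f n "\<lambda>j. a"] assms by auto

fun PR :: "((nat\<Rightarrow>nat)\<Rightarrow>nat) \<Rightarrow> ((nat\<Rightarrow>nat)\<Rightarrow>nat) \<Rightarrow> nat \<Rightarrow> (nat\<Rightarrow>nat) \<Rightarrow> nat" where
  "PR f g 0 e = f e"
| "PR f g (Suc k) e = g (econs k (econs (PR f g k e) e))"

lemma rf_PR:
  assumes "rf n f" "rf (Suc (Suc n)) g"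
  shows "rf (Suc n) (\<lambda>e. PR f g (e 0) (\<lambda>i. e (Suc i)))"
proof -
  obtain r where r: "\<forall>e. eval r (map e [0..<n]) (f e)" using assms(1) unfolding rf_def by blast
  obtain s where s: "\<forall>e. eval s (map e [0..<Suc (Suc n)]) (g e)" using assms(2) unfolding rf_def by blast
  have k: "eval (Prim r s) (k # map e [0..<n]) (PR f g k e)" for k e
  proof (induction k)
    case 0 then show ?case using r by (auto intro: eval_Prim0)
  next
    case (Suc k)
    have "eval s (k # PR f g k e # map e [0..<n]) (PR f g (Suc k) e)"
      using s[rule_format, of "econs k (econs (PR f g k e) e)"] by (simp only: map_econs PR.simps)
    then show ?case using Suc by (auto intro: eval_PrimS)
  qed
  show ?thesis unfolding rf_def
    by (rule exI[of _ "Prim r s"]) (simp only: map_upt_Suc_env k, simp)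
qed



lemma rf_cong: "rf n F \<Longrightarrow> (\<And>e. F e = G e) \<Longrightarrow> rf n G"
proof -
  assume "rf n F" "\<And>e. F e = G e"
  then have "F = G" by auto
  then show ?thesis using \<open>rf n F\<close> by simp
qed

lemma rp_cong: "rp n P \<Longrightarrow> (\<And>e. P e = Q e) \<Longrightarrow> rp n Q"
  unfolding rp_def by (erule rf_cong) simp

lemma rf_const: "rf n (\<lambda>e. c)"
proof (induction c)
  case 0 then show ?case by (rule rf_zero)
next
  case (Suc c) then show ?case by (rule rf_Suc)
qed

lemma rf_subst0: "rf (Suc n) H \<Longrightarrow> rf n a \<Longrightarrow> rf n (\<lambda>e. H (econs (a e) e))"
proof -
  assume H: "rf (Suc n) H" and a: "rf n a"
  have "rf n (\<lambda>e. H (\<lambda>j. (\<lambda>j e. case j of 0 \<Rightarrow> a e | Suc i \<Rightarrow> e i) j e))"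
    apply (rule rf_comp[OF H])
    apply (intro allI impI)
    subgoal for j by (cases j) (auto simp: a rf_var)
    done
  moreover have "(\<lambda>j. case j of 0 \<Rightarrow> a e | Suc i \<Rightarrow> e i) = econs (a e) e" for e
    by (auto simp: econs_def)
  ultimately show ?thesis by simp
qed

lemma PR_add: "PR (\<lambda>e. e 0) (\<lambda>e. Suc (e (Suc 0))) k e = k + e 0"
  by (induction k) auto

lemma rf_add2: "rf 2 (\<lambda>e. e 0 + e 1)"
proof -
  have "rf (Suc 1) (\<lambda>e. PR (\<lambda>e. e 0) (\<lambda>e. Suc (e (Suc 0))) (e 0) (\<lambda>i. e (Suc i)))"
    by (rule rf_PR) (auto intro!: rf_var rf_Suc)
  then show ?thesis by (simp add: PR_add numeral_2_eq_2)
qed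

lemma rf_add: "rf n a \<Longrightarrow> rf n b \<Longrightarrow> rf n (\<lambda>e. a e + b e)"
  using rf_comp2[OF rf_add2] by simp

lemma PR_pred: "PR (\<lambda>e. 0) (\<lambda>e. e 0) k e = k - 1"
  by (cases k) auto

lemma rf_pred: "rf 1 (\<lambda>e. e 0 - 1)"
proof -
  have "rf (Suc 0) (\<lambda>e. PR (\<lambda>e. 0) (\<lambda>e. e 0) (e 0) (\<lambda>i. e (Suc i)))"
    by (rule rf_PR) (auto intro!: rf_var rf_zero)
  then show ?thesis by (simp add: PR_pred)
qed

lemma PR_sub: "PR (\<lambda>e. e 0) (\<lambda>e. e (Suc 0) - Suc 0) k e = e 0 - k"
  by (induction k) auto

lemma rf_sub2: "rf 2 (\<lambda>e. e 1 - e 0)"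
proof -
  have "rf (Suc 1) (\<lambda>e. PR (\<lambda>e. e 0) (\<lambda>e. e (Suc 0) - Suc 0) (e 0) (\<lambda>i. e (Suc i)))"
    by (rule rf_PR) (auto intro!: rf_var rf_comp1[OF rf_pred, of _ "\<lambda>e. e (Suc 0)", simplified])
  then show ?thesis by (simp add: PR_sub numeral_2_eq_2)
qed

lemma rf_sub: "rf n a \<Longrightarrow> rf n b \<Longrightarrow> rf n (\<lambda>e. a e - b e)"
  using rf_comp2[OF rf_sub2, of n b a] by simp

lemma PR_mult: "PR (\<lambda>e. 0) (\<lambda>e. e (Suc 0) + e (Suc (Suc 0))) k e = k * e 0"
  by (induction k) auto

lemma rf_mult2: "rf 2 (\<lambda>e. e 0 * e 1)"
proof -
  have "rf (Suc 1) (\<lambda>e. PR (\<lambda>e. 0) (\<lambda>e. e (Suc 0) + e (Suc (Suc 0))) (e 0) (\<lambda>i. e (Suc i)))"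
    by (rule rf_PR) (auto intro!: rf_var rf_zero rf_add)
  then show ?thesis by (simp add: PR_mult numeral_2_eq_2)
qed

lemma rf_mult: "rf n a \<Longrightarrow> rf n b \<Longrightarrow> rf n (\<lambda>e. a e * b e)"
  using rf_comp2[OF rf_mult2] by simp

lemma rp_less: "rf n a \<Longrightarrow> rf n b \<Longrightarrow> rp n (\<lambda>e. a e < b e)"
  unfolding rp_def
  by (rule rf_cong[of _ "\<lambda>e. 1 - (1 - (b e - a e))"]) (auto intro!: rf_sub rf_const)

lemma rp_not: "rp n P \<Longrightarrow> rp n (\<lambda>e. \<not> P e)"
  unfolding rp_def
  by (rule rf_cong[of _ "\<lambda>e. 1 - (if P e then 1 else 0)"]) (auto intro!: rf_sub rf_const)

lemma rp_and: "rp n P \<Longrightarrow> rp n Q \<Longrightarrow> rp n (\<lambda>e. P e \<and> Q e)"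
  unfolding rp_def
  by (rule rf_cong[of _ "\<lambda>e. (if P e then 1 else 0) * (if Q e then 1 else 0)"]) (auto intro!: rf_mult)

lemma rp_or: "rp n P \<Longrightarrow> rp n Q \<Longrightarrow> rp n (\<lambda>e. P e \<or> Q e)"
  apply (rule rp_cong[of _ "\<lambda>e. \<not> (\<not> P e \<and> \<not> Q e)"])
   apply (intro rp_not rp_and; assumption)
  by simp

lemma rp_imp: "rp n P \<Longrightarrow> rp n Q \<Longrightarrow> rp n (\<lambda>e. P e \<longrightarrow> Q e)"
  apply (rule rp_cong[of _ "\<lambda>e. \<not> P e \<or> Q e"])
   apply (intro rp_not rp_or; assumption)
  by simp

lemma rp_le: "rf n a \<Longrightarrow> rf n b \<Longrightarrow> rp n (\<lambda>e. a e \<le> b e)"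
  by (rule rp_cong[of _ "\<lambda>e. \<not> b e < a e"]) (auto intro!: rp_not rp_less)

lemma rp_eq: "rf n a \<Longrightarrow> rf n b \<Longrightarrow> rp n (\<lambda>e. a e = b e)"
  by (rule rp_cong[of _ "\<lambda>e. a e \<le> b e \<and> b e \<le> a e"]) (auto intro!: rp_and rp_le)

lemma rp_neq: "rf n a \<Longrightarrow> rf n b \<Longrightarrow> rp n (\<lambda>e. a e \<noteq> b e)"
  by (intro rp_not rp_eq)

lemma rp_const: "rp n (\<lambda>e. c)"
  unfolding rp_def by (cases c) (auto intro: rf_const)

lemma rf_if: "rp n P \<Longrightarrow> rf n a \<Longrightarrow> rf n b \<Longrightarrow> rf n (\<lambda>e. if P e then a e else b e)"
  unfolding rp_def
  apply (rule rf_cong[of _ "\<lambda>e. (if P e then 1 else 0) * a e + (1 - (if P e then 1 else 0)) * b e"])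
   apply (rule rf_add; rule rf_mult; (rule rf_sub)?; (rule rf_const)?; assumption)
  by simp

definition bmin :: "nat \<Rightarrow> (nat \<Rightarrow> bool) \<Rightarrow> nat" where
  "bmin a P = (if \<exists>k<a. P k then (LEAST k. P k) else a)"

fun bm :: "(nat \<Rightarrow> bool) \<Rightarrow> nat \<Rightarrow> nat" where
  "bm P 0 = 0"
| "bm P (Suc k) = (if bm P k < k then bm P k else if P k then k else Suc k)"

lemma bm_bmin: "bm P k = bmin k P"
proof (induction k)
  case 0 then show ?case by (simp add: bmin_def)
next
  case (Suc k)
  show ?case
  proof (cases "\<exists>j<k. P j")
    case True
    then obtain j where j: "j < k" "P j" by blast
    have "(LEAST j. P j) \<le> j" using j(2) by (rule Least_le)
    then have "(LEAST j. P j) < k" using j(1) by simp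
    moreover have "\<exists>j<Suc k. P j" using j less_SucI by blast
    ultimately show ?thesis using Suc True by (simp add: bmin_def)
  next
    case False
    then have "bm P k = k" using Suc False by (simp add: bmin_def)
    moreover have "P k \<Longrightarrow> (LEAST j. P j) = k" using False
      by (intro Least_equality) (auto simp: not_less[symmetric])
    ultimately show ?thesis using False by (auto simp: bmin_def less_Suc_eq)
  qed
qed

lemma PR_bm: "PR (\<lambda>e. 0) (\<lambda>e. if e (Suc 0) < e 0 then e (Suc 0) else if P (e 0) (\<lambda>i. e (Suc (Suc i))) then e 0 else Suc (e 0)) k e
  = bm (\<lambda>k. P k e) k"
  by (induction k) auto

lemma rf_bmin:
  assumes P: "rp (Suc n) (\<lambda>e. P (e 0) (\<lambda>i. e (Suc i)))" and a: "rf n a"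
  shows "rf n (\<lambda>e. bmin (a e) (\<lambda>k. P k e))"
proof -
  have P2: "rp (Suc (Suc n)) (\<lambda>e. P (e 0) (\<lambda>i. e (Suc (Suc i))))"
  proof -
    have "rf (Suc (Suc n)) (\<lambda>e. (\<lambda>e. if P (e 0) (\<lambda>i. e (Suc i)) then 1 else 0)
         (\<lambda>j. (\<lambda>j e. case j of 0 \<Rightarrow> e 0 | Suc i \<Rightarrow> e (Suc (Suc i))) j e))"
      apply (rule rf_comp[OF P[unfolded rp_def]])
      apply (intro allI impI)
      subgoal for j by (cases j) (auto intro!: rf_var)
      done
    then show ?thesis unfolding rp_def by simp
  qed
  have "rf (Suc n) (\<lambda>e. PR (\<lambda>e. 0) (\<lambda>e. if e (Suc 0) < e 0 then e (Suc 0) else if P (e 0) (\<lambda>i. e (Suc (Suc i))) then e 0 else Suc (e 0)) (e 0) (\<lambda>i. e (Suc i)))"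
    by (rule rf_PR) (auto intro!: rf_zero rf_if rp_less rf_var rf_Suc P2)
  from rf_subst0[OF this a] show ?thesis by (simp add: PR_bm bm_bmin)
qed

lemma rp_ex:
  assumes P: "rp (Suc n) (\<lambda>e. P (e 0) (\<lambda>i. e (Suc i)))" and a: "rf n a"
  shows "rp n (\<lambda>e. \<exists>k<a e. P k e)"
proof -
  have "rp n (\<lambda>e. bmin (a e) (\<lambda>k. P k e) < a e)"
    by (intro rp_less rf_bmin P a)
  moreover have "(bmin a (\<lambda>k. Q k) < a) = (\<exists>k<a. Q k)" for a Q
  proof
    assume "bmin a (\<lambda>k. Q k) < a"
    then show "\<exists>k<a. Q k" unfolding bmin_def by (cases "\<exists>k<a. Q k") auto
  next
    assume "\<exists>k<a. Q k"
    then obtain k where k: "k < a" "Q k" by blast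
    have "(LEAST k. Q k) \<le> k" using k(2) by (rule Least_le)
    then show "bmin a (\<lambda>k. Q k) < a" using k \<open>\<exists>k<a. Q k\<close> unfolding bmin_def by simp
  qed
  ultimately show ?thesis by simp
qed

lemma rp_all:
  assumes P: "rp (Suc n) (\<lambda>e. P (e 0) (\<lambda>i. e (Suc i)))" and a: "rf n a"
  shows "rp n (\<lambda>e. \<forall>k<a e. P k e)"
proof -
  have "rp n (\<lambda>e. \<not> (\<exists>k<a e. \<not> P k e))"
    by (intro rp_not rp_ex a P)
  then show ?thesis by simp
qed



lemma rf_shift: "rf n a \<Longrightarrow> rf (Suc n) (\<lambda>e. a (\<lambda>i. e (Suc i)))"
proof -
  assume a: "rf n a"
  have "rf (Suc n) (\<lambda>e. a (\<lambda>j. (\<lambda>j e. e (Suc j)) j e))"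
    by (rule rf_comp[OF a]) (simp add: rf_var)
  then show ?thesis by simp
qed

lemma rp_shift: "rp n a \<Longrightarrow> rp (Suc n) (\<lambda>e. a (\<lambda>i. e (Suc i)))"
  unfolding rp_def by (drule rf_shift) simp

lemma PR_tri: "PR (\<lambda>e. 0) (\<lambda>e. e (Suc 0) + Suc (e 0)) k e = triangle k"
  by (induction k) auto

lemma rf_tri1: "rf 1 (\<lambda>e. triangle (e 0))"
proof -
  have "rf (Suc 0) (\<lambda>e. PR (\<lambda>e. 0) (\<lambda>e. e (Suc 0) + Suc (e 0)) (e 0) (\<lambda>i. e (Suc i)))"
    by (rule rf_PR) (auto intro!: rf_zero rf_add rf_var rf_Suc)
  then show ?thesis by (simp only: PR_tri One_nat_def)
qed

lemma rf_tri: "rf n a \<Longrightarrow> rf n (\<lambda>e. triangle (a e))"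
  using rf_comp1[OF rf_tri1] by simp

lemma rf_penc: "rf n a \<Longrightarrow> rf n b \<Longrightarrow> rf n (\<lambda>e. prod_encode (a e, b e))"
  unfolding prod_encode_def by (simp add: rf_tri rf_add)

lemmas rfI = rf_var rf_const rf_Suc rf_add rf_sub rf_mult rf_if rf_bmin rf_tri rf_penc
  rp_less rp_not rp_and rp_or rp_imp rp_le rp_eq rp_const rp_ex rp_all

definition pd1 :: "nat \<Rightarrow> nat" where "pd1 m = fst (prod_decode m)"
definition pd2 :: "nat \<Rightarrow> nat" where "pd2 m = snd (prod_decode m)"

lemma pd_simps[simp]: "pd1 (prod_encode (x, y)) = x" "pd2 (prod_encode (x, y)) = y"
  by (simp_all add: pd1_def pd2_def)

lemma penc_pd: "prod_encode (pd1 m, pd2 m) = m"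
  by (simp add: pd1_def pd2_def)

lemma pd_le: "pd1 m \<le> m" "pd2 m \<le> m"
  by (metis le_prod_encode_1 penc_pd, metis le_prod_encode_2 penc_pd)

lemma pd1_bmin: "pd1 m = bmin (Suc m) (\<lambda>x. \<exists>y<Suc m. prod_encode (x, y) = m)"
proof -
  have ex: "\<exists>y<Suc m. prod_encode (pd1 m, y) = m" using pd_le penc_pd by (metis le_imp_less_Suc)
  have "(LEAST x. \<exists>y<Suc m. prod_encode (x, y) = m) = pd1 m"
  proof (rule Least_equality)
    show "\<exists>y<Suc m. prod_encode (pd1 m, y) = m" by (rule ex)
    fix x assume "\<exists>y<Suc m. prod_encode (x, y) = m"
    then obtain y where "prod_encode (x, y) = m" by blast
    then show "pd1 m \<le> x" by auto
  qed
  moreover have "pd1 m < Suc m" using pd_le by (simp add: le_imp_less_Suc)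
  ultimately show ?thesis using ex unfolding bmin_def by auto
qed

lemma pd2_bmin: "pd2 m = bmin (Suc m) (\<lambda>y. \<exists>x<Suc m. prod_encode (x, y) = m)"
proof -
  have ex: "\<exists>x<Suc m. prod_encode (x, pd2 m) = m" using pd_le penc_pd by (metis le_imp_less_Suc)
  have "(LEAST y. \<exists>x<Suc m. prod_encode (x, y) = m) = pd2 m"
  proof (rule Least_equality)
    show "\<exists>x<Suc m. prod_encode (x, pd2 m) = m" by (rule ex)
    fix y assume "\<exists>x<Suc m. prod_encode (x, y) = m"
    then obtain x where "prod_encode (x, y) = m" by blast
    then show "pd2 m \<le> y" by auto
  qed
  moreover have "pd2 m < Suc m" using pd_le by (simp add: le_imp_less_Suc)
  ultimately show ?thesis using ex unfolding bmin_def by auto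
qed

lemma rf_pd1_1: "rf 1 (\<lambda>e. pd1 (e 0))"
  unfolding pd1_bmin by (intro rfI) simp_all

lemma rf_pd2_1: "rf 1 (\<lambda>e. pd2 (e 0))"
  unfolding pd2_bmin by (intro rfI) simp_all

lemma rf_pd1: "rf n a \<Longrightarrow> rf n (\<lambda>e. pd1 (a e))"
  using rf_comp1[OF rf_pd1_1] by simp
lemma rf_pd2: "rf n a \<Longrightarrow> rf n (\<lambda>e. pd2 (a e))"
  using rf_comp1[OF rf_pd2_1] by simp



section \<open>lists\<close>

definition ltl :: "nat \<Rightarrow> nat" where "ltl c = (if c = 0 then 0 else pd2 (c - 1))"
definition lhd :: "nat \<Rightarrow> nat" where "lhd c = pd1 (c - 1)"
definition lcons :: "nat \<Rightarrow> nat \<Rightarrow> nat" where "lcons x c = Suc (prod_encode (x, c))"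
definition litr :: "nat \<Rightarrow> nat \<Rightarrow> nat" where "litr c k = (ltl ^^ k) c"
definition lnth :: "nat \<Rightarrow> nat \<Rightarrow> nat" where "lnth c k = lhd (litr c k)"
definition llen :: "nat \<Rightarrow> nat" where "llen c = bmin (Suc c) (\<lambda>k. litr c k = 0)"

lemma list_decode_Suc: "list_decode (Suc n) = pd1 n # list_decode (pd2 n)"
  by (simp add: pd1_def pd2_def split: prod.split)

declare list_decode.simps(2)[simp del]

lemma lcons_dec[simp]: "list_decode (lcons x c) = x # list_decode c"
  by (simp add: lcons_def list_decode_Suc)

lemma lcons_enc: "lcons x (list_encode xs) = list_encode (x # xs)"
  by (simp add: lcons_def)

lemma ltl_dec[simp]: "list_decode (ltl c) = tl (list_decode c)"
  by (cases c) (auto simp: ltl_def list_decode_Suc)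

lemma lhd_dec: "c \<noteq> 0 \<Longrightarrow> lhd c = hd (list_decode c)"
  by (cases c) (auto simp: lhd_def list_decode_Suc)

lemma list_decode_0_iff: "list_decode c = [] \<longleftrightarrow> c = 0"
  by (metis list_decode.simps(1) list_decode_inverse list_encode.simps(1))

lemma litr_dec: "list_decode (litr c k) = drop k (list_decode c)"
  by (induction k) (auto simp: litr_def drop_Suc tl_drop)

lemma lnth_dec: "k < length (list_decode c) \<Longrightarrow> lnth c k = list_decode c ! k"
proof -
  assume k: "k < length (list_decode c)"
  then have ne: "litr c k \<noteq> 0" using litr_dec[of c k] by (metis drop_eq_Nil leD list_decode.simps(1))
  then show ?thesis unfolding lnth_def using lhd_dec[OF ne] litr_dec[of c k] k by (simp add: hd_drop_conv_nth)
qed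

lemma len_dec_le: "length (list_decode c) \<le> c"
proof (induction c rule: less_induct)
  case (less c)
  show ?case
  proof (cases c)
    case 0 then show ?thesis by simp
  next
    case (Suc n)
    have "pd2 n \<le> n" by (rule pd_le)
    then show ?thesis using less[of "pd2 n"] Suc by (simp add: list_decode_Suc)
  qed
qed

lemma llen_dec: "llen c = length (list_decode c)"
proof -
  have z: "litr c k = 0 \<longleftrightarrow> length (list_decode c) \<le> k" for k
    using litr_dec[of c k] list_decode_0_iff[of "litr c k"] by auto
  have "(LEAST k. litr c k = 0) = length (list_decode c)"
    by (rule Least_equality) (auto simp: z)
  moreover have "length (list_decode c) < Suc c" using len_dec_le by (simp add: le_imp_less_Suc)
  ultimately show ?thesis unfolding llen_def bmin_def using z by auto
qed

lemma rf_ltl: "rf n a \<Longrightarrow> rf n (\<lambda>e. ltl (a e))"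
  unfolding ltl_def by (intro rfI rf_pd2) simp_all

lemma rf_lhd: "rf n a \<Longrightarrow> rf n (\<lambda>e. lhd (a e))"
  unfolding lhd_def by (intro rfI rf_pd1) simp_all

lemma rf_lcons: "rf n a \<Longrightarrow> rf n b \<Longrightarrow> rf n (\<lambda>e. lcons (a e) (b e))"
  unfolding lcons_def by (intro rfI) simp_all

lemma PR_litr: "PR (\<lambda>e. e 0) (\<lambda>e. ltl (e (Suc 0))) k e = litr (e 0) k"
  by (induction k) (auto simp: litr_def)

lemma rf_litr2: "rf 2 (\<lambda>e. litr (e 1) (e 0))"
proof -
  have "rf (Suc 1) (\<lambda>e. PR (\<lambda>e. e 0) (\<lambda>e. ltl (e (Suc 0))) (e 0) (\<lambda>i. e (Suc i)))"
    by (rule rf_PR) (auto intro!: rf_var rf_ltl)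
  then show ?thesis by (simp only: PR_litr numeral_2_eq_2 One_nat_def)
qed

lemma rf_litr: "rf n a \<Longrightarrow> rf n b \<Longrightarrow> rf n (\<lambda>e. litr (a e) (b e))"
  using rf_comp2[OF rf_litr2, of n b a] by simp

lemma rf_lnth: "rf n a \<Longrightarrow> rf n b \<Longrightarrow> rf n (\<lambda>e. lnth (a e) (b e))"
  unfolding lnth_def by (intro rf_lhd rf_litr)

lemma rf_llen: "rf n a \<Longrightarrow> rf n (\<lambda>e. llen (a e))"
  unfolding llen_def by (intro rfI rf_litr rf_shift) simp_all

lemmas rfI2 = rfI rf_pd1 rf_pd2 rf_ltl rf_lhd rf_lcons rf_lnth rf_llen

section \<open>partial functions\<close>

definition pf :: "nat \<Rightarrow> ((nat \<Rightarrow> nat) \<Rightarrow> nat option) \<Rightarrow> bool" where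
  "pf n F \<longleftrightarrow> (\<exists>r. \<forall>e y. eval r (map e [0..<n]) y \<longleftrightarrow> F e = Some y)"

lemma proj_list: "list_all2 (\<lambda>g y. eval g xs y) (map Proj [0..<length xs]) ys \<longleftrightarrow> ys = xs"
proof
  assume "list_all2 (\<lambda>g y. eval g xs y) (map Proj [0..<length xs]) ys"
  then have "length ys = length xs" "\<forall>i<length xs. eval (Proj i) xs (ys ! i)"
    by (auto simp: list_all2_conv_all_nth)
  then show "ys = xs" by (auto intro!: nth_equalityI elim: ProjE)
next
  assume "ys = xs"
  then show "list_all2 (\<lambda>g y. eval g xs y) (map Proj [0..<length xs]) ys"
    by (auto simp: list_all2_conv_all_nth intro: eval_Proj)
qed

lemma pf_mu:
  assumes P: "rp (Suc n) (\<lambda>e. P (e 0) (\<lambda>i. e (Suc i)))"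
    and G: "rf (Suc n) (\<lambda>e. G (e 0) (\<lambda>i. e (Suc i)))"
  shows "pf n (\<lambda>e. if \<exists>k. P k e then Some (G (LEAST k. P k e) e) else None)"
proof -
  obtain rQ where rQ0: "\<forall>e. eval rQ (map e [0..<Suc n]) (if \<not> P (e 0) (\<lambda>i. e (Suc i)) then 1 else 0)"
    using rp_not[OF P] unfolding rp_def rf_def by blast
  have rQ: "eval rQ (k # map e [0..<n]) (if P k e then 0 else 1)" for k e
    using rQ0[rule_format, of "econs k e"] unfolding map_econs by (cases "P k e") auto
  obtain rG where rG0: "\<forall>e. eval rG (map e [0..<Suc n]) (G (e 0) (\<lambda>i. e (Suc i)))"
    using G unfolding rf_def by blast
  have rG: "eval rG (k # map e [0..<n]) (G k e)" for k e
    using rG0[rule_format, of "econs k e"] unfolding map_econs by simp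
  have mu: "eval (Mu rQ) (map e [0..<n]) k \<longleftrightarrow> P k e \<and> (\<forall>m<k. \<not> P m e)" for e k
  proof
    assume "eval (Mu rQ) (map e [0..<n]) k"
    then have a: "eval rQ (k # map e [0..<n]) 0" and b: "\<forall>m<k. \<exists>y. eval rQ (m # map e [0..<n]) (Suc y)"
      by (blast elim: MuE)+
    have "P k e" using eval_det[OF a rQ[of k e]] by (cases "P k e") auto
    moreover have "\<not> P m e" if "m < k" for m
    proof
      assume "P m e"
      from b that obtain y where "eval rQ (m # map e [0..<n]) (Suc y)" by blast
      from eval_det[OF this rQ[of m e]] \<open>P m e\<close> show False by simp
    qed
    ultimately show "P k e \<and> (\<forall>m<k. \<not> P m e)" by blast
  next
    assume "P k e \<and> (\<forall>m<k. \<not> P m e)"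
    note asm = this
    show "eval (Mu rQ) (map e [0..<n]) k"
    proof (rule eval_Mu)
      show "eval rQ (k # map e [0..<n]) 0" using rQ[of k e] asm by simp
      show "\<forall>m<k. \<exists>y. eval rQ (m # map e [0..<n]) (Suc y)"
      proof (intro allI impI)
        fix m assume "m < k"
        then have "\<not> P m e" using asm by blast
        then have "eval rQ (m # map e [0..<n]) (Suc 0)" using rQ[of m e] by simp
        then show "\<exists>y. eval rQ (m # map e [0..<n]) (Suc y)" by blast
      qed
    qed
  qed
  let ?r = "Comp rG (Mu rQ # map Proj [0..<n])"
  have ev: "eval ?r (map e [0..<n]) y \<longleftrightarrow> (\<exists>k. P k e \<and> (\<forall>m<k. \<not> P m e) \<and> y = G k e)" for e y
  proof
    assume "eval ?r (map e [0..<n]) y"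
    then obtain ys where a: "list_all2 (\<lambda>g y. eval g (map e [0..<n]) y) (Mu rQ # map Proj [0..<n]) ys"
      and b: "eval rG ys y" by (blast elim: CompE)
    from a obtain k ys' where ys: "ys = k # ys'" "eval (Mu rQ) (map e [0..<n]) k"
      "list_all2 (\<lambda>g y. eval g (map e [0..<n]) y) (map Proj [0..<n]) ys'"
      by (auto simp: list_all2_Cons1)
    then have "ys' = map e [0..<n]" using proj_list[of "map e [0..<n]" ys'] by simp
    then have "y = G k e" using eval_det[OF b] rG[of k e] ys by simp
    then show "\<exists>k. P k e \<and> (\<forall>m<k. \<not> P m e) \<and> y = G k e" using ys(2) mu by blast
  next
    assume "\<exists>k. P k e \<and> (\<forall>m<k. \<not> P m e) \<and> y = G k e"
    then obtain k where k: "P k e" "\<forall>m<k. \<not> P m e" "y = G k e" by blast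
    have "list_all2 (\<lambda>g y. eval g (map e [0..<n]) y) (Mu rQ # map Proj [0..<n]) (k # map e [0..<n])"
      using mu[of e k] k proj_list[of "map e [0..<n]" "map e [0..<n]"] by simp
    then show "eval ?r (map e [0..<n]) y" using rG[of k e] k(3) by (intro eval_Comp) auto
  qed
  have least: "P k e \<Longrightarrow> (\<forall>m<k. \<not> P m e) \<Longrightarrow> (LEAST k. P k e) = k" for k e
    by (rule Least_equality) (auto simp: not_less[symmetric])
  show ?thesis unfolding pf_def
  proof (rule exI[of _ ?r], intro allI)
    fix e y
    show "eval ?r (map e [0..<n]) y \<longleftrightarrow> (if \<exists>k. P k e then Some (G (LEAST k. P k e) e) else None) = Some y"
    proof (cases "\<exists>k. P k e")
      case True
      define k0 where "k0 = (LEAST k. P k e)"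
      have "P k0 e" unfolding k0_def using True by (metis LeastI)
      moreover have "\<forall>m<k0. \<not> P m e" unfolding k0_def using not_less_Least by blast
      ultimately have "(\<exists>k. P k e \<and> (\<forall>m<k. \<not> P m e) \<and> y = G k e) \<longleftrightarrow> y = G k0 e"
        using least by blast
      then show ?thesis unfolding ev using True by (auto simp: k0_def[symmetric])
    next
      case False
      then show ?thesis unfolding ev by auto
    qed
  qed
qed

section \<open>strings\<close>

fun dec :: "nat \<Rightarrow> bstring" where
  "dec 0 = []"
| "dec (Suc n) = (if even n then False # dec (n div 2) else True # dec (n div 2))"

lemma enc_dec[simp]: "enc (dec n) = n"
  by (induction n rule: dec.induct) auto

lemma dec_enc[simp]: "dec (enc x) = x"
  by (induction x) auto

lemma enc_inj: "enc x = enc y \<longleftrightarrow> x = y"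
  by (metis dec_enc)

lemma machine_pf: "pf 1 (\<lambda>e. map_option enc (V (dec (e 0)))) \<Longrightarrow> machine V"
proof -
  assume "pf 1 (\<lambda>e. map_option enc (V (dec (e 0))))"
  then obtain r where r: "\<And>e y. eval r (map e [0..<1]) y \<longleftrightarrow> map_option enc (V (dec (e 0))) = Some y"
    unfolding pf_def by blast
  show ?thesis unfolding machine_def
  proof (rule exI[of _ r], intro allI)
    fix x m
    show "eval r [enc x] m \<longleftrightarrow> (\<exists>y. V x = Some y \<and> m = enc y)"
      using r[of "\<lambda>_. enc x" m] by auto
  qed
qed

lemma machine_eval: "machine V \<Longrightarrow> \<exists>r. \<forall>n m. eval r [n] m \<longleftrightarrow> V (dec n) = Some (dec m)"
proof -
  assume "machine V"
  then obtain r where r: "\<And>x m. eval r [enc x] m \<longleftrightarrow> (\<exists>y. V x = Some y \<and> m = enc y)"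
    unfolding machine_def by blast
  have "eval r [n] m \<longleftrightarrow> V (dec n) = Some (dec m)" for n m
  proof -
    have "eval r [n] m \<longleftrightarrow> (\<exists>y. V (dec n) = Some y \<and> m = enc y)" using r[of "dec n" m] by simp
    also have "\<dots> \<longleftrightarrow> V (dec n) = Some (dec m)" by (metis dec_enc enc_dec)
    finally show ?thesis .
  qed
  then show ?thesis by blast
qed

lemma tc_rf: "total_computable h \<Longrightarrow> rf 1 (\<lambda>e. enc (h (dec (e 0))))"
proof -
  assume "total_computable h"
  then obtain r where r: "\<And>x m. eval r [enc x] m \<longleftrightarrow> m = enc (h x)"
    unfolding total_computable_def machine_def by auto
  have "eval r (map e [0..<1]) (enc (h (dec (e 0))))" for e
    using r[of "dec (e 0)" "enc (h (dec (e 0)))"] by simp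
  then show ?thesis unfolding rf_def by blast
qed



fun code :: "recf \<Rightarrow> nat" where
  "code Zero = prod_encode (0, 0)"
| "code Succ = prod_encode (1, 0)"
| "code (Proj i) = prod_encode (2, i)"
| "code (Comp f gs) = prod_encode (3, prod_encode (code f, list_encode (map code gs)))"
| "code (Prim f g) = prod_encode (4, prod_encode (code f, code g))"
| "code (Mu f) = prod_encode (5, code f)"

abbreviation f1 :: "nat \<Rightarrow> nat" where "f1 n \<equiv> pd1 n"
abbreviation f2 :: "nat \<Rightarrow> nat" where "f2 n \<equiv> pd1 (pd2 n)"
abbreviation f3 :: "nat \<Rightarrow> nat" where "f3 n \<equiv> pd1 (pd2 (pd2 n))"
abbreviation f4 :: "nat \<Rightarrow> nat" where "f4 n \<equiv> pd2 (pd2 (pd2 n))"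

definition nd :: "nat \<Rightarrow> nat \<Rightarrow> nat \<Rightarrow> nat \<Rightarrow> nat" where
  "nd c x y a = prod_encode (c, prod_encode (x, prod_encode (y, a)))"

lemma nd_simps[simp]: "f1 (nd c x y a) = c" "f2 (nd c x y a) = x" "f3 (nd c x y a) = y" "f4 (nd c x y a) = a"
  by (simp_all add: nd_def)

definition okn :: "nat set \<Rightarrow> nat \<Rightarrow> bool" where
"okn S n \<longleftrightarrow> (let c = f1 n; x = f2 n; y = f3 n; a = f4 n; t = pd1 c; d = pd2 c; xs = list_decode x in
  (t = 0 \<and> y = 0) \<or>
  (t = 1 \<and> xs \<noteq> [] \<and> y = Suc (hd xs)) \<or>
  (t = 2 \<and> d < length xs \<and> y = xs ! d) \<or>
  (t = 3 \<and> length (list_decode a) = length (list_decode (pd2 d)) \<and>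
     (\<forall>j<length (list_decode (pd2 d)). \<exists>m\<in>S. f1 m = list_decode (pd2 d) ! j \<and> f2 m = x \<and> f3 m = list_decode a ! j) \<and>
     (\<exists>m\<in>S. f1 m = pd1 d \<and> f2 m = a \<and> f3 m = y)) \<or>
  (t = 4 \<and> xs \<noteq> [] \<and> ((hd xs = 0 \<and> (\<exists>m\<in>S. f1 m = pd1 d \<and> f2 m = ltl x \<and> f3 m = y)) \<or>
      (hd xs \<noteq> 0 \<and> (\<exists>m\<in>S. f1 m = c \<and> f2 m = lcons (hd xs - 1) (ltl x) \<and> f3 m = a) \<and>
         (\<exists>m\<in>S. f1 m = pd2 d \<and> f2 m = lcons (hd xs - 1) (lcons a (ltl x)) \<and> f3 m = y)))) \<or>
  (t = 5 \<and> (\<exists>m\<in>S. f1 m = d \<and> f2 m = lcons y x \<and> f3 m = 0) \<and>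
     (\<forall>k<y. \<exists>m\<in>S. f1 m = d \<and> f2 m = lcons k x \<and> f3 m \<noteq> 0)))"

definition sem :: "nat \<Rightarrow> bool" where
  "sem m \<longleftrightarrow> (\<forall>f. code f = f1 m \<longrightarrow> eval f (list_decode (f2 m)) (f3 m))"

lemma ltl_enc[simp]: "ltl (list_encode xs) = list_encode (tl xs)"
  by (metis list_decode_inverse ltl_dec list_encode_inverse)

lemma okn_sound:
  assumes S: "\<forall>m\<in>S. sem m" and ok: "okn S n"
  shows "sem n"
  unfolding sem_def
proof (intro allI impI)
  fix f assume cf: "code f = f1 n"
  let ?x = "f2 n" let ?y = "f3 n" let ?a = "f4 n" let ?xs = "list_decode (f2 n)"
  have semD: "m \<in> S \<Longrightarrow> code g = f1 m \<Longrightarrow> eval g (list_decode (f2 m)) (f3 m)" for m g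
    using S unfolding sem_def by blast
  show "eval f ?xs ?y"
  proof (cases f)
    case Zero
    then have "?y = 0" using ok cf unfolding okn_def Let_def by (auto simp flip: cf)
    then show ?thesis using Zero by (simp add: eval_Zero)
  next
    case Succ
    then have "?xs \<noteq> [] \<and> ?y = Suc (hd ?xs)" using ok cf unfolding okn_def Let_def by (auto simp flip: cf)
    then show ?thesis using Succ by (cases ?xs) (auto intro: eval_Succ)
  next
    case (Proj i)
    then have "i < length ?xs \<and> ?y = ?xs ! i" using ok cf unfolding okn_def Let_def by (auto simp flip: cf)
    then show ?thesis using Proj by (metis eval_Proj)
  next
    case (Comp f0 gs)
    then have c: "length (list_decode ?a) = length gs"
      "\<forall>j<length gs. \<exists>m\<in>S. f1 m = code (gs ! j) \<and> f2 m = ?x \<and> f3 m = list_decode ?a ! j"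
      "\<exists>m\<in>S. f1 m = code f0 \<and> f2 m = ?a \<and> f3 m = ?y"
      using ok cf unfolding okn_def Let_def by (auto simp flip: cf)
    have "list_all2 (\<lambda>g y. eval g ?xs y) gs (list_decode ?a)"
      unfolding list_all2_conv_all_nth using c(1,2) semD by (metis (no_types, lifting))
    moreover have "eval f0 (list_decode ?a) ?y" using c(3) semD by (metis list_encode_inverse)
    ultimately show ?thesis using Comp by (auto intro: eval_Comp)
  next
    case (Prim f0 g0)
    then have c: "?xs \<noteq> [] \<and> ((hd ?xs = 0 \<and> (\<exists>m\<in>S. f1 m = code f0 \<and> f2 m = ltl ?x \<and> f3 m = ?y)) \<or>
      (hd ?xs \<noteq> 0 \<and> (\<exists>m\<in>S. f1 m = code f \<and> f2 m = lcons (hd ?xs - 1) (ltl ?x) \<and> f3 m = ?a) \<and>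
         (\<exists>m\<in>S. f1 m = code g0 \<and> f2 m = lcons (hd ?xs - 1) (lcons ?a (ltl ?x)) \<and> f3 m = ?y)))"
      using ok cf unfolding okn_def Let_def by (auto simp flip: cf)
    then obtain v vs where xs: "?xs = v # vs" by (cases ?xs) auto
    show ?thesis
    proof (cases v)
      case 0
      with c xs obtain m where "m \<in> S" "f1 m = code f0" "f2 m = ltl ?x" "f3 m = ?y" by auto
      then have "eval f0 vs ?y" using semD[of m f0] xs by simp
      then show ?thesis using xs 0 Prim by (auto intro: eval_Prim0)
    next
      case (Suc v')
      with c xs obtain m1 m2 where "m1 \<in> S" "f1 m1 = code f" "f2 m1 = lcons v' (ltl ?x)" "f3 m1 = ?a"
        "m2 \<in> S" "f1 m2 = code g0" "f2 m2 = lcons v' (lcons ?a (ltl ?x))" "f3 m2 = ?y" by auto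
      then have "eval f (v' # vs) ?a" "eval g0 (v' # ?a # vs) ?y"
        using semD[of m1 f] semD[of m2 g0] xs by auto
      then show ?thesis using xs Suc Prim by (auto intro: eval_PrimS)
    qed
  next
    case (Mu f0)
    then have c: "(\<exists>m\<in>S. f1 m = code f0 \<and> f2 m = lcons ?y ?x \<and> f3 m = 0) \<and>
     (\<forall>k<?y. \<exists>m\<in>S. f1 m = code f0 \<and> f2 m = lcons k ?x \<and> f3 m \<noteq> 0)"
      using ok cf unfolding okn_def Let_def by (auto simp flip: cf)
    have "eval f0 (?y # ?xs) 0" using c semD by fastforce
    moreover have "\<forall>k<?y. \<exists>z. eval f0 (k # ?xs) (Suc z)"
    proof (intro allI impI)
      fix k assume "k < ?y"
      then obtain m where "m \<in> S" "f1 m = code f0" "f2 m = lcons k ?x" "f3 m \<noteq> 0" using c by blast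
      then have "eval f0 (k # ?xs) (f3 m)" using semD[of m f0] by simp
      then show "\<exists>z. eval f0 (k # ?xs) (Suc z)" using \<open>f3 m \<noteq> 0\<close> by (metis not0_implies_Suc)
    qed
    ultimately show ?thesis using Mu by (auto intro: eval_Mu)
  qed
qed

definition valid :: "nat list \<Rightarrow> bool" where
  "valid L \<longleftrightarrow> (\<forall>i<length L. okn (set (take i L)) (L ! i))"

lemma valid_sound: "valid L \<Longrightarrow> m \<in> set L \<Longrightarrow> sem m"
proof -
  assume v: "valid L"
  have "\<forall>i. i < length L \<longrightarrow> sem (L ! i)"
  proof (intro allI)
    fix i show "i < length L \<longrightarrow> sem (L ! i)"
    proof (induction i rule: less_induct)
      case (less i)
      show ?case
      proof
        assume i: "i < length L"
        have "\<forall>m\<in>set (take i L). sem m"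
          using less i by (auto simp: in_set_conv_nth)
        then show "sem (L ! i)" using okn_sound v i unfolding valid_def by blast
      qed
    qed
  qed
  then show "m \<in> set L \<Longrightarrow> sem m" by (auto simp: in_set_conv_nth)
qed

lemma okn_mono: "okn S n \<Longrightarrow> S \<subseteq> T \<Longrightarrow> okn T n"
  unfolding okn_def Let_def
  apply (elim disjE)
       apply (simp; fail)
      apply (simp; fail)
     apply (simp; fail)
    apply (rule disjI2, rule disjI2, rule disjI2, rule disjI1) apply blast
   apply (rule disjI2, rule disjI2, rule disjI2, rule disjI2, rule disjI1) apply blast
  apply (rule disjI2, rule disjI2, rule disjI2, rule disjI2, rule disjI2) apply blast
  done

declare list_encode.simps(2)[simp del]
declare lcons_enc[simp]

lemma valid_Nil: "valid []" by (simp add: valid_def)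

lemma valid_append: "valid A \<Longrightarrow> valid B \<Longrightarrow> valid (A @ B)"
  unfolding valid_def
proof (intro allI impI)
  fix i assume A: "\<forall>i<length A. okn (set (take i A)) (A ! i)" and B: "\<forall>i<length B. okn (set (take i B)) (B ! i)"
    and i: "i < length (A @ B)"
  show "okn (set (take i (A @ B))) ((A @ B) ! i)"
  proof (cases "i < length A")
    case True then show ?thesis using A by (simp add: nth_append)
  next
    case False
    then have "okn (set (take (i - length A) B)) (B ! (i - length A))" using B i by simp
    then show ?thesis using False by (auto simp: nth_append elim!: okn_mono)
  qed
qed

lemma valid_snoc: "valid L \<Longrightarrow> okn (set L) n \<Longrightarrow> valid (L @ [n])"
  unfolding valid_def by (auto simp: nth_append less_Suc_eq)

lemma collect:
  fixes k :: nat
  assumes "\<And>m. m < k \<Longrightarrow> \<exists>L. valid L \<and> R m (set L)"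
    and mono: "\<And>m S T. R m S \<Longrightarrow> S \<subseteq> T \<Longrightarrow> R m T"
  shows "\<exists>L. valid L \<and> (\<forall>m<k. R m (set L))"
  using assms(1)
proof (induction k)
  case 0 then show ?case using valid_Nil by blast
next
  case (Suc k)
  then obtain L where L: "valid L" "\<forall>m<k. R m (set L)" by auto
  obtain L' where L': "valid L'" "R k (set L')" using Suc.prems by blast
  have "valid (L @ L')" using L L' valid_append by blast
  moreover have "\<forall>m<Suc k. R m (set (L @ L'))"
    using L L' mono by (auto simp: less_Suc_eq)
  ultimately show ?case by blast
qed

definition has :: "nat set \<Rightarrow> nat \<Rightarrow> nat \<Rightarrow> nat \<Rightarrow> bool" where
  "has S c x y \<longleftrightarrow> (\<exists>m\<in>S. f1 m = c \<and> f2 m = x \<and> f3 m = y)"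

lemma has_mono: "has S c x y \<Longrightarrow> S \<subseteq> T \<Longrightarrow> has T c x y"
  unfolding has_def by blast

lemma has_nd: "has S c x y \<longleftrightarrow> (\<exists>a. nd c x y a \<in> S)"
  unfolding has_def by (metis nd_def nd_simps penc_pd)

lemma okn_Comp:
  assumes "length ys = length gs" "\<forall>j<length gs. has S (code (gs!j)) x (ys!j)"
    "has S (code f) (list_encode ys) z"
  shows "okn S (nd (code (Comp f gs)) x z (list_encode ys))"
  unfolding okn_def Let_def
  apply (rule disjI2, rule disjI2, rule disjI2, rule disjI1)
  using assms by (simp add: has_def)

lemma okn_Prim0:
  assumes "has S (code f) (list_encode xs) y"
  shows "okn S (nd (code (Prim f g)) (list_encode (0 # xs)) y a)"
  unfolding okn_def Let_def
  apply (rule disjI2, rule disjI2, rule disjI2, rule disjI2, rule disjI1)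
  using assms by (simp add: has_def)

lemma okn_PrimS:
  assumes "has S (code (Prim f g)) (list_encode (n # xs)) y" "has S (code g) (list_encode (n # y # xs)) z"
  shows "okn S (nd (code (Prim f g)) (list_encode (Suc n # xs)) z y)"
  unfolding okn_def Let_def
  apply (rule disjI2, rule disjI2, rule disjI2, rule disjI2, rule disjI1)
  using assms by (simp add: has_def)

lemma okn_Mu:
  assumes "has S (code f) (list_encode (n # xs)) 0"
    "\<forall>m<n. \<exists>q\<in>S. f1 q = code f \<and> f2 q = list_encode (m # xs) \<and> f3 q \<noteq> 0"
  shows "okn S (nd (code (Mu f)) (list_encode xs) n a)"
  unfolding okn_def Let_def
  apply (rule disjI2, rule disjI2, rule disjI2, rule disjI2, rule disjI2)
  using assms by (simp add: has_def)

lemma eval_complete: "eval f xs y \<Longrightarrow> \<exists>L. valid L \<and> has (set L) (code f) (list_encode xs) y"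
proof (induction rule: eval.induct)
  case (eval_Zero xs)
  let ?n = "nd (code Zero) (list_encode xs) 0 0"
  have "valid ([] @ [?n])" by (rule valid_snoc[OF valid_Nil]) (simp add: okn_def Let_def list_decode_Suc)
  then show ?case unfolding has_nd by force
next
  case (eval_Succ x xs)
  let ?n = "nd (code Succ) (list_encode (x # xs)) (Suc x) 0"
  have "valid ([] @ [?n])" by (rule valid_snoc[OF valid_Nil]) (simp add: okn_def Let_def list_decode_Suc)
  then show ?case unfolding has_nd by force
next
  case (eval_Proj i xs)
  let ?n = "nd (code (Proj i)) (list_encode xs) (xs ! i) 0"
  have "valid ([] @ [?n])" by (rule valid_snoc[OF valid_Nil]) (use eval_Proj in \<open>simp add: okn_def\<close>)
  then show ?case unfolding has_nd by force
next
  case (eval_Comp xs gs ys f z)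
  have "\<exists>L. valid L \<and> (\<forall>j<length gs. has (set L) (code (gs ! j)) (list_encode xs) (ys ! j))"
    by (rule collect) (use eval_Comp.IH(1) in \<open>auto simp: list_all2_conv_all_nth intro: has_mono\<close>)
  then obtain L1 where L1: "valid L1" "\<forall>j<length gs. has (set L1) (code (gs ! j)) (list_encode xs) (ys ! j)"
    by blast
  obtain L2 where L2: "valid L2" "has (set L2) (code f) (list_encode ys) z" using eval_Comp.IH(2) by blast
  have len: "length ys = length gs" using eval_Comp.IH(1) by (simp add: list_all2_conv_all_nth)
  let ?n = "nd (code (Comp f gs)) (list_encode xs) z (list_encode ys)"
  have "okn (set (L1 @ L2)) ?n"
    using L1(2) L2(2) len by (intro okn_Comp) (auto intro: has_mono)
  then have "valid ((L1 @ L2) @ [?n])" using L1 L2 valid_append valid_snoc by blast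
  then show ?case unfolding has_nd by force
next
  case (eval_Prim0 f xs y g)
  obtain L where L: "valid L" "has (set L) (code f) (list_encode xs) y" using eval_Prim0.IH by blast
  let ?n = "nd (code (Prim f g)) (list_encode (0 # xs)) y 0"
  have "okn (set L) ?n" using L(2) by (rule okn_Prim0)
  then have "valid (L @ [?n])" using L valid_snoc by blast
  then show ?case unfolding has_nd by force
next
  case (eval_PrimS f g n xs y z)
  obtain L1 where L1: "valid L1" "has (set L1) (code (Prim f g)) (list_encode (n # xs)) y" using eval_PrimS.IH(1) by blast
  obtain L2 where L2: "valid L2" "has (set L2) (code g) (list_encode (n # y # xs)) z" using eval_PrimS.IH(2) by blast
  let ?n = "nd (code (Prim f g)) (list_encode (Suc n # xs)) z y"
  have "okn (set (L1 @ L2)) ?n" using L1(2) L2(2) by (intro okn_PrimS) (auto intro: has_mono)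
  then have "valid ((L1 @ L2) @ [?n])" using L1 L2 valid_append valid_snoc by blast
  then show ?case unfolding has_nd by force
next
  case (eval_Mu f n xs)
  obtain L1 where L1: "valid L1" "has (set L1) (code f) (list_encode (n # xs)) 0" using eval_Mu.IH(1) by blast
  have "\<exists>L. valid L \<and> (\<forall>m<n. \<exists>q\<in>set L. f1 q = code f \<and> f2 q = list_encode (m # xs) \<and> f3 q \<noteq> 0)"
  proof (rule collect)
    fix m assume "m < n"
    then obtain w where "eval f (m # xs) (Suc w)" "\<exists>L. valid L \<and> has (set L) (code f) (list_encode (m # xs)) (Suc w)"
      using eval_Mu.IH(2) by blast
    then show "\<exists>L. valid L \<and> (\<exists>q\<in>set L. f1 q = code f \<and> f2 q = list_encode (m # xs) \<and> f3 q \<noteq> 0)"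
      unfolding has_def by force
  qed blast
  then obtain L2 where L2: "valid L2" "\<forall>m<n. \<exists>q\<in>set L2. f1 q = code f \<and> f2 q = list_encode (m # xs) \<and> f3 q \<noteq> 0"
    by blast
  let ?n = "nd (code (Mu f)) (list_encode xs) n 0"
  have "okn (set (L1 @ L2)) ?n" using L1(2) L2(2) by (intro okn_Mu) (auto intro: has_mono)
  then have "valid ((L1 @ L2) @ [?n])" using L1 L2 valid_append valid_snoc by blast
  then show ?case unfolding has_nd by force
qed

definition cert :: "nat \<Rightarrow> nat \<Rightarrow> nat \<Rightarrow> nat \<Rightarrow> bool" where
  "cert c x y w \<longleftrightarrow> valid (list_decode w) \<and> has (set (list_decode w)) c x y"

theorem eval_cert: "eval f xs y \<longleftrightarrow> (\<exists>w. cert (code f) (list_encode xs) y w)"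
proof
  assume "eval f xs y"
  then obtain L where "valid L" "has (set L) (code f) (list_encode xs) y" using eval_complete by blast
  then show "\<exists>w. cert (code f) (list_encode xs) y w" unfolding cert_def
    by (intro exI[of _ "list_encode L"]) simp
next
  assume "\<exists>w. cert (code f) (list_encode xs) y w"
  then obtain w m where "valid (list_decode w)" "m \<in> set (list_decode w)" "f1 m = code f"
    "f2 m = list_encode xs" "f3 m = y" unfolding cert_def has_def by blast
  then have "sem m" using valid_sound by blast
  then show "eval f xs y" using \<open>f1 m = code f\<close> \<open>f2 m = list_encode xs\<close> \<open>f3 m = y\<close>
    unfolding sem_def by auto
qed



definition okc :: "nat \<Rightarrow> nat \<Rightarrow> bool" where
"okc w i \<longleftrightarrow> (let n = lnth w i; c = f1 n; x = f2 n; y = f3 n; a = f4 n; t = pd1 c; d = pd2 c in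
  (t = 0 \<and> y = 0) \<or>
  (t = 1 \<and> x \<noteq> 0 \<and> y = Suc (lhd x)) \<or>
  (t = 2 \<and> d < llen x \<and> y = lnth x d) \<or>
  (t = 3 \<and> llen a = llen (pd2 d) \<and>
     (\<forall>j<llen (pd2 d). \<exists>k<i. f1 (lnth w k) = lnth (pd2 d) j \<and> f2 (lnth w k) = x \<and> f3 (lnth w k) = lnth a j) \<and>
     (\<exists>k<i. f1 (lnth w k) = pd1 d \<and> f2 (lnth w k) = a \<and> f3 (lnth w k) = y)) \<or>
  (t = 4 \<and> x \<noteq> 0 \<and> ((lhd x = 0 \<and> (\<exists>k<i. f1 (lnth w k) = pd1 d \<and> f2 (lnth w k) = ltl x \<and> f3 (lnth w k) = y)) \<or>
      (lhd x \<noteq> 0 \<and> (\<exists>k<i. f1 (lnth w k) = c \<and> f2 (lnth w k) = lcons (lhd x - 1) (ltl x) \<and> f3 (lnth w k) = a) \<and>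
         (\<exists>k<i. f1 (lnth w k) = pd2 d \<and> f2 (lnth w k) = lcons (lhd x - 1) (lcons a (ltl x)) \<and> f3 (lnth w k) = y)))) \<or>
  (t = 5 \<and> (\<exists>k<i. f1 (lnth w k) = d \<and> f2 (lnth w k) = lcons y x \<and> f3 (lnth w k) = 0) \<and>
     (\<forall>q<y. \<exists>k<i. f1 (lnth w k) = d \<and> f2 (lnth w k) = lcons q x \<and> f3 (lnth w k) \<noteq> 0)))"

lemma ex_take:
  assumes i: "i \<le> length (list_decode w)"
  shows "(\<exists>m\<in>set (take i (list_decode w)). Q m) = (\<exists>k<i. Q (lnth w k))"
proof
  assume "\<exists>m\<in>set (take i (list_decode w)). Q m"
  then obtain k where "k < length (take i (list_decode w))" "Q (take i (list_decode w) ! k)"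
    by (auto simp: in_set_conv_nth)
  then show "\<exists>k<i. Q (lnth w k)" using i by (auto simp: lnth_dec)
next
  assume "\<exists>k<i. Q (lnth w k)"
  then obtain k where k: "k < i" "Q (lnth w k)" by blast
  then have "take i (list_decode w) ! k \<in> set (take i (list_decode w))" using i by (intro nth_mem) simp
  moreover have "take i (list_decode w) ! k = lnth w k" using k i by (simp add: lnth_dec)
  ultimately show "\<exists>m\<in>set (take i (list_decode w)). Q m" using k by auto
qed

lemma lhd_dec': "c \<noteq> 0 \<Longrightarrow> hd (list_decode c) = lhd c"
  by (simp add: lhd_dec)

lemma lnth_dec': "j < llen c \<Longrightarrow> list_decode c ! j = lnth c j"
  by (simp add: lnth_dec llen_dec)

lemma okc_okn: "i < length (list_decode w) \<Longrightarrow> okc w i = okn (set (take i (list_decode w))) (list_decode w ! i)"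
  unfolding okc_def okn_def Let_def
  by (simp add: ex_take lnth_dec[symmetric] llen_dec[symmetric] list_decode_0_iff lhd_dec' lnth_dec' cong: conj_cong)

definition certc :: "nat \<Rightarrow> nat \<Rightarrow> nat \<Rightarrow> nat \<Rightarrow> bool" where
  "certc c x y w \<longleftrightarrow> (\<forall>i<llen w. okc w i) \<and>
     (\<exists>k<llen w. f1 (lnth w k) = c \<and> f2 (lnth w k) = x \<and> f3 (lnth w k) = y)"

lemma certc_cert: "certc c x y w = cert c x y w"
proof -
  have "(\<forall>i<llen w. okc w i) = valid (list_decode w)"
    unfolding valid_def by (simp add: okc_okn llen_dec)
  moreover have "(\<exists>k<llen w. f1 (lnth w k) = c \<and> f2 (lnth w k) = x \<and> f3 (lnth w k) = y)
     = has (set (list_decode w)) c x y"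
    using ex_take[of "length (list_decode w)" w "\<lambda>m. f1 m = c \<and> f2 m = x \<and> f3 m = y"]
    unfolding has_def by (simp add: llen_dec)
  ultimately show ?thesis unfolding certc_def cert_def by simp
qed

lemma rp_okc: "rp 2 (\<lambda>e. okc (e 0) (e 1))"
  unfolding okc_def Let_def by (intro rfI2) simp_all

lemma rp_okc': "rf n a \<Longrightarrow> rf n b \<Longrightarrow> rp n (\<lambda>e. okc (a e) (b e))"
  using rf_comp2[OF rp_okc[unfolded rp_def], of n a b] unfolding rp_def by simp

lemma rp_cert: "rp 4 (\<lambda>e. cert (e 0) (e 1) (e 2) (e 3))"
  unfolding certc_cert[symmetric] certc_def by (intro rfI2 rp_okc') simp_all



lemma rp_cert': "rf n a \<Longrightarrow> rf n b \<Longrightarrow> rf n c \<Longrightarrow> rf n d \<Longrightarrow> rp n (\<lambda>e. cert (a e) (b e) (c e) (d e))"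
proof -
  assume a: "rf n a" and b: "rf n b" and c: "rf n c" and d: "rf n d"
  have "rf n (\<lambda>e. (\<lambda>e. if cert (e 0) (e 1) (e 2) (e 3) then 1 else 0)
     (\<lambda>j. (\<lambda>j::nat. if j = 0 then a else if j = 1 then b else if j = 2 then c else d) j e))"
    by (rule rf_comp[OF rp_cert[unfolded rp_def]]) (auto simp: a b c d less_Suc_eq numeral_eq_Suc)
  then show ?thesis unfolding rp_def by simp
qed

definition pre :: "nat \<Rightarrow> nat \<Rightarrow> nat" where
  "pre e n = ((\<lambda>k. 2 * k + 2) ^^ e) (2 * n + 1)"

lemma pre_enc: "pre e (enc x) = enc (replicate e True @ False # x)"
  by (induction e) (auto simp: pre_def)

lemma rep_inj: "replicate e True @ False # s = replicate e' True @ False # s' \<Longrightarrow> e = e' \<and> s = s'"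
proof (induction e arbitrary: e')
  case 0 then show ?case by (cases e') auto
next
  case (Suc e) then show ?case by (cases e') auto
qed

lemma pre_inj: "pre e n = pre e' n' \<Longrightarrow> e = e' \<and> n = n'"
proof -
  assume "pre e n = pre e' n'"
  then have "enc (replicate e True @ False # dec n) = enc (replicate e' True @ False # dec n')"
    using pre_enc[of e "dec n"] pre_enc[of e' "dec n'"] by simp
  then have "e = e' \<and> dec n = dec n'" using rep_inj enc_inj by blast
  then show ?thesis by (metis enc_dec)
qed

lemma PR_pre: "PR (\<lambda>e. 2 * e 0 + 1) (\<lambda>e. 2 * e (Suc 0) + 2) k e = pre k (e 0)"
  by (induction k) (auto simp: pre_def)

lemma rf_pre2: "rf 2 (\<lambda>e. pre (e 0) (e 1))"
proof -
  have "rf (Suc 1) (\<lambda>e. PR (\<lambda>e. 2 * e 0 + 1) (\<lambda>e. 2 * e (Suc 0) + 2) (e 0) (\<lambda>i. e (Suc i)))"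
    by (rule rf_PR) (intro rfI; simp)+
  then have "rf (Suc 1) (\<lambda>e. pre (e 0) (e (Suc 0)))" unfolding PR_pre .
  then show ?thesis by (simp add: numeral_2_eq_2)
qed

lemma rf_pre: "rf n a \<Longrightarrow> rf n b \<Longrightarrow> rf n (\<lambda>e. pre (a e) (b e))"
  using rf_comp2[OF rf_pre2] by simp

fun K :: "nat \<Rightarrow> recf" where
  "K 0 = Zero"
| "K (Suc b) = Comp Succ [K b]"

lemma eval_K: "eval (K b) xs b"
  by (induction b) (auto intro!: eval_Zero eval_Comp eval_Succ)

fun kc :: "nat \<Rightarrow> nat" where
  "kc 0 = code Zero"
| "kc (Suc b) = prod_encode (3, prod_encode (code Succ, lcons (kc b) 0))"

lemma kc_code: "kc b = code (K b)"
  by (induction b) (auto simp: lcons_def list_encode.simps)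

lemma PR_kc: "PR (\<lambda>e. code Zero) (\<lambda>e. prod_encode (3, prod_encode (code Succ, lcons (e (Suc 0)) 0))) k e = kc k"
  by (induction k) auto

lemma rf_kc: "rf n a \<Longrightarrow> rf n (\<lambda>e. kc (a e))"
proof -
  assume a: "rf n a"
  have "rf (Suc 0) (\<lambda>e. PR (\<lambda>e. code Zero) (\<lambda>e. prod_encode (3, prod_encode (code Succ, lcons (e (Suc 0)) 0))) (e 0) (\<lambda>i. e (Suc i)))"
    by (rule rf_PR) (intro rfI rf_lcons; simp)+
  then have "rf 1 (\<lambda>e. kc (e 0))" by (simp only: PR_kc One_nat_def)
  from rf_comp1[OF this a] show ?thesis by simp
qed



abbreviation g1 :: "nat \<Rightarrow> nat" where "g1 T \<equiv> pd1 T"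
abbreviation g2 :: "nat \<Rightarrow> nat" where "g2 T \<equiv> pd1 (pd2 T)"
abbreviation g3 :: "nat \<Rightarrow> nat" where "g3 T \<equiv> pd1 (pd2 (pd2 T))"
abbreviation g4 :: "nat \<Rightarrow> nat" where "g4 T \<equiv> pd1 (pd2 (pd2 (pd2 T)))"
abbreviation g5 :: "nat \<Rightarrow> nat" where "g5 T \<equiv> pd1 (pd2 (pd2 (pd2 (pd2 T))))"
abbreviation g6 :: "nat \<Rightarrow> nat" where "g6 T \<equiv> pd1 (pd2 (pd2 (pd2 (pd2 (pd2 T)))))"
abbreviation g7 :: "nat \<Rightarrow> nat" where "g7 T \<equiv> pd2 (pd2 (pd2 (pd2 (pd2 (pd2 T)))))"

definition tup :: "nat \<Rightarrow> nat \<Rightarrow> nat \<Rightarrow> nat \<Rightarrow> nat \<Rightarrow> nat \<Rightarrow> nat \<Rightarrow> nat" where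
  "tup a b c d e f g = prod_encode (a, prod_encode (b, prod_encode (c, prod_encode (d, prod_encode (e, prod_encode (f, g))))))"

lemma tup_simps[simp]: "g1 (tup a b c d e f g) = a" "g2 (tup a b c d e f g) = b" "g3 (tup a b c d e f g) = c"
  "g4 (tup a b c d e f g) = d" "g5 (tup a b c d e f g) = e" "g6 (tup a b c d e f g) = f" "g7 (tup a b c d e f g) = g"
  by (simp_all add: tup_def)

definition RaceP :: "nat \<Rightarrow> nat \<Rightarrow> nat \<Rightarrow> nat \<Rightarrow> bool" where
  "RaceP cV cU T m \<longleftrightarrow> pre (g1 T) (g2 T) = m \<and>
     ((g3 T = 0 \<and> cert cV (lcons (g2 T) 0) (g4 T) (g5 T)) \<or>
      (g3 T = 1 \<and> cert (g1 T) (lcons (g2 T) 0) (g6 T) (g5 T) \<and> cert cU (lcons (g6 T) 0) (g4 T) (g7 T)))"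

definition Out :: "nat \<Rightarrow> nat" where "Out T = (if g3 T = 0 then g4 T else 2 * g4 T + 2)"

definition Wn :: "nat \<Rightarrow> nat \<Rightarrow> nat \<Rightarrow> nat option" where
  "Wn cV cU m = (if \<exists>T. RaceP cV cU T m then Some (Out (LEAST T. RaceP cV cU T m)) else None)"

lemma machine_W: "machine (\<lambda>x. map_option dec (Wn cV cU (enc x)))"
proof (rule machine_pf)
  have pfR: "pf 1 (\<lambda>e. if \<exists>k. RaceP cV cU k (e 0) then Some (Out (LEAST k. RaceP cV cU k (e 0))) else None)"
  proof (rule pf_mu[where P = "\<lambda>k e. RaceP cV cU k (e 0)" and G = "\<lambda>k e. Out k"])
    show "rp (Suc 1) (\<lambda>e. RaceP cV cU (e 0) (e (Suc 0)))"
      unfolding RaceP_def by (intro rfI2 rp_cert' rf_pre; simp)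
    show "rf (Suc 1) (\<lambda>e. Out (e 0))"
      unfolding Out_def by (intro rfI2; simp)
  qed
  have eqF: "(\<lambda>e. map_option enc (map_option dec (Wn cV cU (e 0))))
     = (\<lambda>e. if \<exists>k. RaceP cV cU k (e 0) then Some (Out (LEAST k. RaceP cV cU k (e 0))) else None)"
    by (auto simp: Wn_def option.map_comp o_def)
  have "pf 1 (\<lambda>e. map_option enc (map_option dec (Wn cV cU (e 0))))" unfolding eqF by (rule pfR)
  then show "pf 1 (\<lambda>e. map_option enc (map_option dec (Wn cV cU (enc (dec (e 0))))))" by simp
qed

lemma penc_recf: "\<exists>rP. \<forall>a b. eval rP [a, b] (prod_encode (a, b))"
proof -
  have "rf 2 (\<lambda>e. prod_encode (e 0, e 1))" by (intro rfI) simp_all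
  then obtain r where r: "\<And>e. eval r (map e [0..<2]) (prod_encode (e 0, e 1))" unfolding rf_def by blast
  have "eval r [a, b] (prod_encode (a, b))" for a b
    using r[of "\<lambda>i. if i = 0 then a else b"] by (simp add: numeral_2_eq_2)
  then show ?thesis by blast
qed

definition sm :: "nat \<Rightarrow> nat \<Rightarrow> nat \<Rightarrow> nat" where
  "sm p a b = prod_encode (3, prod_encode (a, lcons (prod_encode (3, prod_encode (p, lcons (kc b) (lcons (code (Proj 0)) 0)))) 0))"

lemma sm_code: "sm (code rP) (code r) b = code (Comp r [Comp rP [K b, Proj 0]])"
  by (simp add: sm_def kc_code lcons_def list_encode.simps)

lemma rf_sm: "rf n a \<Longrightarrow> rf n b \<Longrightarrow> rf n (\<lambda>e. sm p (a e) (b e))"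
  unfolding sm_def by (intro rfI2 rf_kc)

lemma eval_sm:
  assumes rP: "\<forall>a b. eval rP [a, b] (prod_encode (a, b))"
  shows "eval (Comp r [Comp rP [K b, Proj 0]]) [x] y \<longleftrightarrow> eval r [prod_encode (b, x)] y"
proof -
  have inner: "eval (Comp rP [K b, Proj 0]) [x] (prod_encode (b, x))"
    using rP eval_K[of b "[x]"] eval_Proj[of 0 "[x]"] by (auto intro!: eval_Comp)
  show ?thesis
  proof
    assume "eval (Comp r [Comp rP [K b, Proj 0]]) [x] y"
    then obtain ys where "list_all2 (\<lambda>g y. eval g [x] y) [Comp rP [K b, Proj 0]] ys" "eval r ys y"
      by (blast elim: CompE)
    then obtain v where "ys = [v]" "eval (Comp rP [K b, Proj 0]) [x] v" "eval r ys y"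
      by (auto simp: list_all2_Cons1)
    then show "eval r [prod_encode (b, x)] y" using eval_det[OF inner] by metis
  next
    assume "eval r [prod_encode (b, x)] y"
    then show "eval (Comp r [Comp rP [K b, Proj 0]]) [x] y"
      using inner by (auto intro!: eval_Comp)
  qed
qed



theorem proposition2p9:
  fixes U :: "bstring \<Rightarrow> bstring option"
  assumes "machine U"
    and "\<forall>V. machine V \<longrightarrow>
           (\<exists>h. total_computable h \<and> length_bounded h \<and>
                (\<forall>x. V x \<noteq> None \<longrightarrow> U (h x) = V x))"
  shows "effectively_optimal U"
  unfolding effectively_optimal_def
proof (intro allI impI)
  fix V :: "bstring \<Rightarrow> bstring option"
  assume mV: "machine V"
  obtain rV where rV: "\<And>n m. eval rV [n] m \<longleftrightarrow> V (dec n) = Some (dec m)" using machine_eval[OF mV] by blast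
  obtain rU where rU: "\<And>n m. eval rU [n] m \<longleftrightarrow> U (dec n) = Some (dec m)" using machine_eval[OF assms(1)] by blast
  define cV where "cV = code rV"
  define cU where "cU = code rU"
  define W where "W = (\<lambda>x. map_option dec (Wn cV cU (enc x)))"
  have mW: "machine W" unfolding W_def by (rule machine_W)
  obtain h where h_tc: "total_computable h" and h_lb: "length_bounded h"
    and h_ok: "\<And>w. W w \<noteq> None \<Longrightarrow> U (h w) = W w" using assms(2) mW by blast
  have rft: "rf 2 (\<lambda>e. enc (h (dec (pre (e 0) (e 1)))))"
  proof -
    have "rf 2 (\<lambda>e. pre (e 0) (e 1))" by (rule rf_pre2)
    from rf_comp1[OF tc_rf[OF h_tc] this] show ?thesis by simp
  qed
  obtain rP where rP: "\<forall>a b. eval rP [a, b] (prod_encode (a, b))" using penc_recf by blast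
  define p where "p = code rP"
  have "rf 1 (\<lambda>e. enc (h (dec (pre (sm p (pd1 (e 0)) (pd1 (e 0))) (pd2 (e 0))))))"
  proof -
    have a: "rf 1 (\<lambda>e. sm p (pd1 (e 0)) (pd1 (e 0)))" by (intro rf_sm rfI2) simp_all
    have b: "rf 1 (\<lambda>e. pd2 (e 0))" by (intro rfI2) simp_all
    from rf_comp2[OF rft a b] show ?thesis by simp
  qed
  then obtain rF where rF0: "\<And>e. eval rF (map e [0..<1]) (enc (h (dec (pre (sm p (pd1 (e 0)) (pd1 (e 0))) (pd2 (e 0))))))"
    unfolding rf_def by blast
  have rF: "eval rF [m] y \<longleftrightarrow> y = enc (h (dec (pre (sm p (pd1 m) (pd1 m)) (pd2 m))))" for m y
    using rF0[of "\<lambda>_. m"] eval_det by auto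
  define u0 where "u0 = code rF"
  define rE where "rE = Comp rF [Comp rP [K u0, Proj 0]]"
  define es where "es = code rE"
  have es_sm: "es = sm p u0 u0" unfolding es_def rE_def p_def u0_def by (rule sm_code[symmetric])
  have rE: "eval rE [n] y \<longleftrightarrow> y = enc (h (dec (pre es n)))" for n y
    unfolding rE_def using eval_sm[OF rP, of rF u0 n y] rF es_sm by simp
  define H where "H = (\<lambda>x. h (replicate es True @ False # x))"
  have H_alt: "H x = h (dec (pre es (enc x)))" for x by (simp add: H_def pre_enc)
  show "\<exists>h. total_computable h \<and> length_bounded h \<and> (\<forall>x. V x = U (h x))"
  proof (intro exI conjI allI)
    show "total_computable H" unfolding total_computable_def machine_def
      by (rule exI[of _ rE]) (auto simp: rE H_alt)
    show "length_bounded H"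
    proof -
      obtain c where c: "\<And>x. length (h x) \<le> length x + c" using h_lb unfolding length_bounded_def by blast
      have "length (H x) \<le> length x + (es + 1 + c)" for x using c[of "replicate es True @ False # x"]
        by (simp add: H_def)
      then show ?thesis unfolding length_bounded_def by blast
    qed
    fix x
    define n where "n = enc x"
    define m where "m = pre es n"
    define z where "z = enc (H x)"
    have Wx: "W (replicate es True @ False # x) = map_option dec (Wn cV cU m)"
      unfolding W_def m_def n_def by (simp add: pre_enc)
    have hx: "h (replicate es True @ False # x) = H x" by (simp add: H_def)
    have lc: "lcons a 0 = list_encode [a]" for a by (simp add: lcons_def list_encode.simps)
    have cert_iff: "(\<exists>w. cert (code f) (lcons a 0) y w) \<longleftrightarrow> eval f [a] y" for f a y
      using eval_cert[of f "[a]" y] lc by simp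
    have xn: "dec n = x" by (simp add: n_def)
    have zH: "enc (h (dec (pre es n))) = z" by (simp add: z_def H_alt n_def)
    have dz: "dec z = H x" by (simp add: z_def)
    show "V x = U (H x)"
    proof (cases "Wn cV cU m")
      case (Some ov)
      then have ex: "\<exists>T. RaceP cV cU T m" by (auto simp: Wn_def split: if_splits)
      define T0 where "T0 = (LEAST T. RaceP cV cU T m)"
      have R0: "RaceP cV cU T0 m" unfolding T0_def using ex by (rule LeastI_ex)
      have o: "ov = Out T0" using Some ex by (simp add: Wn_def T0_def)
      have UH: "U (H x) = Some (dec ov)" using h_ok[of "replicate es True @ False # x"] Wx hx Some by simp
      have gs: "g1 T0 = es" "g2 T0 = n" using R0 pre_inj unfolding RaceP_def m_def by blast+
      show ?thesis
      proof (cases "g3 T0 = 0")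
        case True
        then have "cert cV (lcons n 0) (g4 T0) (g5 T0)" using R0 gs unfolding RaceP_def by auto
        then have "eval rV [n] (g4 T0)" using cert_iff[of rV n "g4 T0"] cV_def by blast
        then have "V x = Some (dec (g4 T0))" using rV xn by simp
        then show ?thesis using UH o True by (simp add: Out_def)
      next
        case False
        then have c1: "cert es (lcons n 0) (g6 T0) (g5 T0)" and c2: "cert cU (lcons (g6 T0) 0) (g4 T0) (g7 T0)"
          using R0 gs unfolding RaceP_def by auto
        have "eval rE [n] (g6 T0)" using c1 cert_iff[of rE n "g6 T0"] es_def by blast
        then have g6: "g6 T0 = z" using rE zH by simp
        have "eval rU [z] (g4 T0)" using c2 g6 cert_iff[of rU z "g4 T0"] cU_def by blast
        then have "U (H x) = Some (dec (g4 T0))" using rU dz by simp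
        then have "dec (g4 T0) = dec (2 * g4 T0 + 2)" using UH o False by (simp add: Out_def)
        then have "g4 T0 = 2 * g4 T0 + 2" by (metis enc_dec)
        then show ?thesis by simp
      qed
    next
      case None
      then have nex: "\<not> RaceP cV cU T m" for T by (auto simp: Wn_def split: if_splits)
      have UH: "U (H x) = None"
      proof (rule ccontr)
        assume "U (H x) \<noteq> None"
        then obtain s where s: "U (H x) = Some s" by blast
        have "eval rU [z] (enc s)" using rU dz s by simp
        then obtain w2 where w2: "cert cU (lcons z 0) (enc s) w2" using cert_iff[of rU z] cU_def by blast
        have "eval rE [n] z" using rE zH by simp
        then obtain w1 where w1: "cert es (lcons n 0) z w1" using cert_iff[of rE n z] es_def by blast
        have "RaceP cV cU (tup es n 1 (enc s) w1 z w2) m" unfolding RaceP_def using w1 w2 by (simp add: m_def)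
        then show False using nex by blast
      qed
      have VH: "V x = None"
      proof (rule ccontr)
        assume "V x \<noteq> None"
        then obtain s where s: "V x = Some s" by blast
        have "eval rV [n] (enc s)" using rV xn s by simp
        then obtain w1 where w1: "cert cV (lcons n 0) (enc s) w1" using cert_iff[of rV n] cV_def by blast
        have "RaceP cV cU (tup es n 0 (enc s) w1 0 0) m" unfolding RaceP_def using w1 by (simp add: m_def)
        then show False using nex by blast
      qed
      show ?thesis using UH VH by simp
    qed
  qed
qed


end
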